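(* Let $\mathbb{X}$ be a metric space, $f:[0,1]\to\mathbb{X}$ continuous, $\xi>6$, and $0<r_-<r_+<\infty$. Let $\{J_i\}_{i=1}^I$ ($I\in\mathbb{N}\cup\{\infty\}$) be closed intervals in $[0,1]$ and $(k_i)_{i=1}^I$ integers bounded from below such that: (1) $J_i\cap J_{i+1}\neq\emptyset$ for all $1\leq i<I$; (2) $\mathrm{diam}\,f(J_i)\leq\xi^{-k_i}r_+$ for all $i$; (3) whenever $i\neq j$ and $k_i=k_j=k$, there exist at least $\lceil3r_+/r_-\rceil$ pairwise disjoint closed intervals $K\subset[0,1]$ with $\mathrm{diam}\,f(K)\geq\xi^{-k}r_-$, each lying (as a subset of $\mathbb{R}$) between $J_i$ and $J_j$. If $\xi>r_+/r_-$, then there is a unique $M\geq1$ with $k_M=\min_{i\geq1}k_i$, and $$\sum_{i=1}^I\mathrm{diam}\,f(J_i)\leq(1+3/\xi)\,\xi^{-k_M}r_+.$$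
   Context: A closed interval $K$ lies between two intervals $J_i,J_j$ if $K$ is contained in the closed interval whose endpoints are the right endpoint of the left one of $J_i,J_j$ and the left endpoint of the right one. *)

theory Defs
  imports "HOL-Analysis.Analysis" "HOL-Library.Extended_Nat"
begin

definition lies_between :: "real set \<Rightarrow> real \<Rightarrow> real \<Rightarrow> real \<Rightarrow> real \<Rightarrow> bool" where
  "lies_between K a1 b1 a2 b2 \<longleftrightarrow> K \<subseteq> {b1..a2} \<or> K \<subseteq> {b2..a1}"

definition idx :: "enat \<Rightarrow> nat set" where
  "idx I = {i. 1 \<le> i \<and> enat i \<le> I}"

end

theory Submission imports Defs begin

lemma diameter_le_metric:
  fixes S :: "'a::metric_space set"
  assumes "S \<noteq> {}" "\<And>x y. x\<in>S \<Longrightarrow> y\<in>S \<Longrightarrow> dist x y \<le> e"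
  shows "diameter S \<le> e"
  unfolding diameter_def using assms by (auto intro!: cSUP_least)

locale setting =
  fixes f :: "real \<Rightarrow> 'X::metric_space"
    and \<xi> rm rp :: real
    and I :: enat
    and a b :: "nat \<Rightarrow> real"
    and k :: "nat \<Rightarrow> int"
  assumes cont: "continuous_on {0..1} f"
    and xi: "\<xi> > 6"
    and r: "0 < rm" "rm < rp"
    and J: "\<And>i. i \<in> idx I \<Longrightarrow> 0 \<le> a i \<and> a i \<le> b i \<and> b i \<le> 1"
    and chain: "\<And>i. i \<in> idx I \<Longrightarrow> Suc i \<in> idx I \<Longrightarrow> {a i..b i} \<inter> {a (Suc i)..b (Suc i)} \<noteq> {}"
    and diamJ: "\<And>i. i \<in> idx I \<Longrightarrow> diameter (f ` {a i..b i}) \<le> \<xi> powi (- k i) * rp"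
    and sep: "\<And>i j. i \<in> idx I \<Longrightarrow> j \<in> idx I \<Longrightarrow> i \<noteq> j \<Longrightarrow> k i = k j \<Longrightarrow>
        \<exists>c d :: nat \<Rightarrow> real.
          (\<forall>m < nat \<lceil>3 * rp / rm\<rceil>. 0 \<le> c m \<and> c m \<le> d m \<and> d m \<le> 1
              \<and> diameter (f ` {c m..d m}) \<ge> \<xi> powi (- k i) * rm
              \<and> lies_between {c m..d m} (a i) (b i) (a j) (b j))
          \<and> (\<forall>m < nat \<lceil>3 * rp / rm\<rceil>. \<forall>m' < nat \<lceil>3 * rp / rm\<rceil>.
               m \<noteq> m' \<longrightarrow> {c m..d m} \<inter> {c m'..d m'} = {})"
    and xir: "\<xi> > rp / rm"
begin

abbreviation D where "D l \<equiv> diameter (f ` {a l..b l})"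

lemma idx_mem: "1 \<le> l \<Longrightarrow> enat l \<le> I \<Longrightarrow> l \<in> idx I" by (simp add: idx_def)

lemma idx_le: "l \<le> q \<Longrightarrow> enat q \<le> I \<Longrightarrow> enat l \<le> I"
  by (meson enat_ord_simps(1) order_trans)

lemma bnd: "0 \<le> c \<Longrightarrow> d \<le> 1 \<Longrightarrow> bounded (f ` {c..d})"
  by (rule compact_imp_bounded[OF compact_continuous_image[OF continuous_on_subset[OF cont] compact_Icc]]) auto

lemma Dnn: "l \<in> idx I \<Longrightarrow> 0 \<le> D l"
  using J[of l] bnd diameter_ge_0 by blast

lemma chain_aux:
  assumes "1 \<le> p" "enat (p+d) \<le> I"
  shows "connected (\<Union>l\<in>{p..p+d}. {a l..b l}) \<and>
    (\<forall>x\<in>(\<Union>l\<in>{p..p+d}. {a l..b l}). \<forall>y\<in>(\<Union>l\<in>{p..p+d}. {a l..b l}).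
        dist (f x) (f y) \<le> (\<Sum>l\<in>{p..p+d}. D l))"
  using assms(2)
proof (induction d)
  case 0
  have p: "p \<in> idx I" using 0 assms(1) by (simp add: idx_def)
  have b: "bounded (f ` {a p..b p})" using J[OF p] bnd by blast
  show ?case using diameter_bounded_bound[OF b] J[OF p] by auto
next
  case (Suc d)
  define V where "V = (\<Union>l\<in>{p..p+d}. {a l..b l})"
  define T where "T = {a (Suc (p+d))..b (Suc (p+d))}"
  have e: "enat (p+d) \<le> I" using idx_le[of "p+d" "p+Suc d"] Suc.prems by simp
  have i1: "p+d \<in> idx I" "Suc (p+d) \<in> idx I" using e Suc.prems assms(1) by (auto simp: idx_def)
  from Suc.IH[OF e] have IH: "connected V" "\<forall>x\<in>V. \<forall>y\<in>V. dist (f x) (f y) \<le> (\<Sum>l\<in>{p..p+d}. D l)"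
    by (auto simp: V_def)
  have U: "(\<Union>l\<in>{p..p+Suc d}. {a l..b l}) = V \<union> T"
    by (auto simp: V_def T_def atLeastAtMostSuc_conv)
  have S: "(\<Sum>l\<in>{p..p+Suc d}. D l) = (\<Sum>l\<in>{p..p+d}. D l) + D (Suc (p+d))"
    by (simp add: atLeastAtMostSuc_conv)
  have ne: "{a (p+d)..b (p+d)} \<inter> T \<noteq> {}" using chain[OF i1] T_def by simp
  then obtain z where z: "z \<in> {a (p+d)..b (p+d)}" "z \<in> T" by blast
  have zV: "z \<in> V" using z(1) V_def by auto
  have sn: "0 \<le> (\<Sum>l\<in>{p..p+d}. D l)"
  proof (rule sum_nonneg)
    fix l assume "l \<in> {p..p+d}"
    then have "l \<in> idx I" using assms(1) e idx_le[of l "p+d"] idx_mem[of l] by simp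
    then show "0 \<le> D l" by (rule Dnn)
  qed
  have Dn: "0 \<le> D (Suc (p+d))" using Dnn i1 by auto
  have dT: "\<forall>x\<in>T. \<forall>y\<in>T. dist (f x) (f y) \<le> D (Suc (p+d))"
  proof -
    have b: "bounded (f ` T)" using J[OF i1(2)] bnd T_def by blast
    show ?thesis using diameter_bounded_bound[OF b] T_def by auto
  qed
  have conn: "connected (V \<union> T)" using IH(1) z zV by (intro connected_Un) (auto simp: T_def)
  have dd: "dist (f x) (f y) \<le> (\<Sum>l\<in>{p..p+d}. D l) + D (Suc (p+d))" if "x \<in> V \<union> T" "y \<in> V \<union> T" for x y
  proof -
    have "dist (f x) (f y) \<le> dist (f x) (f z) + dist (f z) (f y)" by (rule dist_triangle)
    show ?thesis
    proof (cases "x \<in> V")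
      case xV: True
      show ?thesis
      proof (cases "y \<in> V")
        case True then show ?thesis using IH(2) xV Dn by fastforce
      next
        case False
        then have "y \<in> T" using that by auto
        then show ?thesis using IH(2) xV zV dT z(2) dist_triangle[of "f x" "f y" "f z"]
          by (smt (verit, best) dist_commute)
      qed
    next
      case False
      then have xT: "x \<in> T" using that by auto
      show ?thesis
      proof (cases "y \<in> V")
        case True then show ?thesis using IH(2) xT zV dT z(2) dist_triangle[of "f x" "f y" "f z"]
          by (smt (verit, best) dist_commute)
      next
        case False
        then have "y \<in> T" using that by auto
        then show ?thesis using dT xT sn by fastforce
      qed
    qed
  qed
  show ?case unfolding U S using conn dd by blast
qed

lemma chain_conn: "1 \<le> p \<Longrightarrow> p \<le> q \<Longrightarrow> enat q \<le> I \<Longrightarrow> connected (\<Union>l\<in>{p..q}. {a l..b l})"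
  using conjunct1[OF chain_aux[of p "q-p"]] by simp

lemma chain_dist: "1 \<le> p \<Longrightarrow> p \<le> q \<Longrightarrow> enat q \<le> I \<Longrightarrow> x \<in> (\<Union>l\<in>{p..q}. {a l..b l}) \<Longrightarrow>
   y \<in> (\<Union>l\<in>{p..q}. {a l..b l}) \<Longrightarrow> dist (f x) (f y) \<le> (\<Sum>l\<in>{p..q}. D l)"
proof -
  assume h: "1 \<le> p" "p \<le> q" "enat q \<le> I" "x \<in> (\<Union>l\<in>{p..q}. {a l..b l})" "y \<in> (\<Union>l\<in>{p..q}. {a l..b l})"
  have e: "p + (q-p) = q" using h by simp
  have "\<forall>x\<in>(\<Union>l\<in>{p..q}. {a l..b l}). \<forall>y\<in>(\<Union>l\<in>{p..q}. {a l..b l}).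
        dist (f x) (f y) \<le> (\<Sum>l\<in>{p..q}. D l)" using conjunct2[OF chain_aux[of p "q-p", unfolded e]] h(1,3) .
  then show ?thesis using h(4,5) by blast
qed


lemma xi_pos: "0 < \<xi>" using xi by simp

lemma pw_pos: "0 < \<xi> powi n" using xi by simp

lemma pw_step: "\<xi> powi (-(n+1)) = \<xi> powi (-n) / \<xi>"
proof -
  have "\<xi> powi (-(n+1)) = \<xi> powi (-n - 1)" by (rule arg_cong[where f="power_int \<xi>"]) simp
  also have "\<dots> = \<xi> powi (-n) / \<xi> powi 1" using xi by (intro power_int_diff) simp
  finally show ?thesis by simp
qed

lemma pw_mono: "n \<le> m \<Longrightarrow> \<xi> powi (-m) \<le> \<xi> powi (-n)"
  using xi by (intro power_int_increasing) auto

lemma rp_lt: "rp < \<xi> * rm"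
  using xir r by (simp add: divide_less_eq mult.commute)

lemma arith_contra:
  assumes t: "t > 0" and h: "t*rm \<le> 2*((1+3/\<xi>)*(t/\<xi>/\<xi>)*rp)"
  shows False
proof -
  have x3: "\<xi>*\<xi>*\<xi> > 0" using xi by simp
  have eq: "2*((1+3/\<xi>)*(t/\<xi>/\<xi>)*rp) = t*(2*(\<xi>+3)*rp)/(\<xi>*\<xi>*\<xi>)"
    using xi_pos by (simp add: field_simps)
  have "t*rm \<le> t*(2*(\<xi>+3)*rp)/(\<xi>*\<xi>*\<xi>)" using h eq by simp
  then have "t*rm*(\<xi>*\<xi>*\<xi>) \<le> t*(2*(\<xi>+3)*rp)" using x3 by (simp add: le_divide_eq)
  then have "t*(rm*(\<xi>*\<xi>*\<xi>)) \<le> t*(2*(\<xi>+3)*rp)" by (simp add: mult.assoc)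
  then have "rm*(\<xi>*\<xi>*\<xi>) \<le> 2*(\<xi>+3)*rp" using t by simp
  then have "\<xi>*\<xi>*\<xi>*rm \<le> 2*(\<xi>+3)*rp" by (simp add: mult.commute)
  moreover have "2*(\<xi>+3)*rp < 2*(\<xi>+3)*(\<xi>*rm)" using rp_lt xi by simp
  moreover have "2*(\<xi>+3)*(\<xi>*rm) < \<xi>*\<xi>*\<xi>*rm"
  proof -
    have "6*\<xi> < \<xi>*\<xi>" using xi by (simp add: mult_strict_right_mono)
    moreover have "2*(\<xi>+3) = 2*\<xi>+6" by simp
    ultimately have "2*(\<xi>+3) < \<xi>*\<xi>" using xi by linarith
    then show ?thesis using xi r by (simp add: mult.assoc mult_strict_right_mono)
  qed
  ultimately show False by linarith
qed

lemma arith_sum: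
  assumes t: "t > 0"
  shows "t*rp + 2*((1+3/\<xi>)*(t/\<xi>)*rp) \<le> (1+3/\<xi>)*t*rp"
proof -
  have "2*((1+3/\<xi>)/\<xi>) \<le> 3/\<xi>"
  proof -
    have "2*(1+3/\<xi>) \<le> 3" using xi by (simp add: field_simps)
    then show ?thesis using xi by (simp add: field_simps)
  qed
  then have "1 + 2*((1+3/\<xi>)/\<xi>) \<le> 1+3/\<xi>" by simp
  then have "(1 + 2*((1+3/\<xi>)/\<xi>))*(t*rp) \<le> (1+3/\<xi>)*(t*rp)"
    using t r by (intro mult_right_mono) auto
  moreover have "t*rp + 2*((1+3/\<xi>)*(t/\<xi>)*rp) = (1 + 2*((1+3/\<xi>)/\<xi>))*(t*rp)"
    using xi_pos by (simp add: field_simps)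
  ultimately show ?thesis by (simp add: mult.assoc)
qed

lemma N3: "3 \<le> nat \<lceil>3 * rp / rm\<rceil>"
proof -
  have "3 < 3 * rp / rm" using r by (simp add: less_divide_eq)
  then have "3 < \<lceil>3 * rp / rm\<rceil>" by linarith
  then show ?thesis by linarith
qed


lemma no_two:
  assumes IH: "\<And>p' q' kk'. Suc q' - p' < n \<Longrightarrow> 1 \<le> p' \<Longrightarrow> enat q' \<le> I \<Longrightarrow> (\<forall>l\<in>{p'..q'}. kk' \<le> k l) \<Longrightarrow>
      (\<forall>l1\<in>{p'..q'}. \<forall>l2\<in>{p'..q'}. k l1 = kk' \<longrightarrow> k l2 = kk' \<longrightarrow> l1 = l2) \<and>
      (\<Sum>l\<in>{p'..q'}. D l) \<le> (1+3/\<xi>) * \<xi> powi (-kk') * rp"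
    and n: "Suc j - i \<le> n"
    and ij: "1 \<le> i" "i < j" "enat j \<le> I" "k i = kk" "k j = kk"
    and btw: "\<And>l. i < l \<Longrightarrow> l < j \<Longrightarrow> kk < k l"
  shows False
proof -
  have iI: "i \<in> idx I" using ij idx_le[of i j] idx_mem by simp
  have jI: "j \<in> idx I" using ij idx_mem by simp
  obtain c d :: "nat \<Rightarrow> real" where
    cd1: "\<forall>m < nat \<lceil>3 * rp / rm\<rceil>. 0 \<le> c m \<and> c m \<le> d m \<and> d m \<le> 1
              \<and> diameter (f ` {c m..d m}) \<ge> \<xi> powi (- k i) * rm
              \<and> lies_between {c m..d m} (a i) (b i) (a j) (b j)"
    and cd2: "\<forall>m < nat \<lceil>3 * rp / rm\<rceil>. \<forall>m' < nat \<lceil>3 * rp / rm\<rceil>.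
               m \<noteq> m' \<longrightarrow> {c m..d m} \<inter> {c m'..d m'} = {}"
    using sep[OF iI jI] ij by force
  define t where "t = \<xi> powi (-kk)"
  have t: "t > 0" using pw_pos t_def by simp
  have Kp0: "0 \<le> c m \<and> c m \<le> d m \<and> d m \<le> 1 \<and> t * rm \<le> diameter (f ` {c m..d m})
       \<and> lies_between {c m..d m} (a i) (b i) (a j) (b j)" if "m < 3" for m
  proof -
    have "m < nat \<lceil>3 * rp / rm\<rceil>" using N3 that by linarith
    then show ?thesis using cd1 ij(4) t_def by simp
  qed
  have Kc: "c m \<le> d m" "0 \<le> c m" "d m \<le> 1" if "m < 3" for m using Kp0[OF that] by simp_all
  have Kd: "t * rm \<le> diameter (f ` {c m..d m})" if "m < 3" for m using Kp0[OF that] by simp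
  have lbt: "lies_between {c m..d m} (a i) (b i) (a j) (b j)" if "m < 3" for m using Kp0[OF that] by simp
  have disj: "{c m..d m} \<inter> {c m'..d m'} = {}" if "m < 3" "m' < 3" "m \<noteq> m'" for m m'
  proof -
    have "m < nat \<lceil>3 * rp / rm\<rceil>" "m' < nat \<lceil>3 * rp / rm\<rceil>" using N3 that by auto
    then show ?thesis using cd2 that(3) by blast
  qed
  have Ji: "0 \<le> a i \<and> a i \<le> b i \<and> b i \<le> 1" using J[OF iI] .
  have Jj: "0 \<le> a j \<and> a j \<le> b j \<and> b j \<le> 1" using J[OF jI] .
  have lb: "(b i \<le> c m \<and> d m \<le> a j) \<or> (b j \<le> c m \<and> d m \<le> a i)" if "m < 3" for m
    using lbt[OF that] Kc[OF that] unfolding lies_between_def by simp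
  show False
  proof (cases "j = Suc i")
    case True
    have "{a i..b i} \<inter> {a j..b j} \<noteq> {}" using chain[of i] iI jI True by simp
    then have "a j \<le> b i" "a i \<le> b j" by auto
    then have "c 0 = d 0" using lb[of 0] Kc[of 0] by linarith
    then have "diameter (f ` {c 0..d 0}) = 0" by simp
    moreover have "0 < t * rm" using t r by simp
    ultimately show False using Kd[of 0] by linarith
  next
    case False
    then have j2: "Suc i < j" using ij by simp
    define p' where "p' = Suc i"
    define q' where "q' = j - 1"
    have pq: "p' \<le> q'" "1 \<le> p'" "enat q' \<le> I" using j2 ij idx_le[of q' j] by (auto simp: p'_def q'_def)
    define k' where "k' = Min (k ` {p'..q'})"
    have fin: "finite (k ` {p'..q'})" "k ` {p'..q'} \<noteq> {}" using pq by auto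
    obtain M where M: "M \<in> {p'..q'}" "k M = k'" using Min_in[OF fin] k'_def by auto
    have k'le: "\<forall>l\<in>{p'..q'}. k' \<le> k l" using fin k'_def by auto
    have k'gt: "kk < k'" using M btw[of M] by (auto simp: p'_def q'_def)
    have U': "\<forall>l1\<in>{p'..q'}. \<forall>l2\<in>{p'..q'}. k l1 = k' \<longrightarrow> k l2 = k' \<longrightarrow> l1 = l2"
    proof -
      have "Suc q' - p' < n" using n j2 by (simp add: p'_def q'_def)
      then show ?thesis using IH[of q' p' k'] pq k'le by blast
    qed
    have gt2: "kk + 2 \<le> k l" if "l \<in> {p'..q'}" "l \<noteq> M" for l
    proof -
      have "k l \<noteq> k'" using U' that M by blast
      then show ?thesis using k'le that k'gt by fastforce
    qed
    define SA where "SA = (\<Sum>l\<in>{p'..M-1}. D l)"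
    define SB where "SB = (\<Sum>l\<in>{Suc M..q'}. D l)"
    define bd where "bd = (1+3/\<xi>) * \<xi> powi (-(kk+2)) * rp"
    have bd: "bd = (1+3/\<xi>)*(t/\<xi>/\<xi>)*rp"
    proof -
      have "\<xi> powi (-(kk+2)) = \<xi> powi (-((kk+1)+1))" by (simp add: algebra_simps)
      also have "\<dots> = t/\<xi>/\<xi>" unfolding pw_step t_def ..
      finally show ?thesis by (simp add: bd_def)
    qed
    have SA: "SA \<le> bd"
    proof -
      have "Suc (M-1) - p' < n" using M n pq by (auto simp: p'_def q'_def)
      moreover have "enat (M-1) \<le> I" using M pq idx_le[of "M-1" q'] by auto
      moreover have "\<forall>l\<in>{p'..M-1}. kk+2 \<le> k l"
      proof
        fix l assume "l \<in> {p'..M-1}"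
        then have "l \<in> {p'..q'}" "l \<noteq> M" using M pq by auto
        then show "kk+2 \<le> k l" by (rule gt2)
      qed
      ultimately show ?thesis using IH[of "M-1" p' "kk+2"] pq by (simp add: SA_def bd_def)
    qed
    have SB: "SB \<le> bd"
    proof -
      have "Suc q' - Suc M < n" using M n pq by (auto simp: p'_def q'_def)
      moreover have "\<forall>l\<in>{Suc M..q'}. kk+2 \<le> k l"
      proof
        fix l assume "l \<in> {Suc M..q'}"
        then have "l \<in> {p'..q'}" "l \<noteq> M" using M by auto
        then show "kk+2 \<le> k l" by (rule gt2)
      qed
      ultimately show ?thesis using IH[of q' "Suc M" "kk+2"] pq by (simp add: SB_def bd_def)
    qed
    have idxr: "l \<in> idx I" if "l \<in> {p'..q'}" for l
      using that pq idx_le[of l q'] idx_mem[of l] by auto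
    have SAn: "0 \<le> SA" unfolding SA_def using M idxr by (intro sum_nonneg Dnn) auto
    have SBn: "0 \<le> SB" unfolding SB_def using M idxr by (intro sum_nonneg Dnn) auto
    define W where "W = (\<Union>l\<in>{p'..q'}. {a l..b l})"
    define A where "A = (\<Union>l\<in>{p'..M-1}. {a l..b l})"
    define B where "B = (\<Union>l\<in>{Suc M..q'}. {a l..b l})"
    define C where "C = {a M..b M}"
    have WABC: "W = A \<union> C \<union> B"
    proof -
      have "{p'..q'} = {p'..M-1} \<union> {M} \<union> {Suc M..q'}" using M pq by auto
      then show ?thesis unfolding W_def A_def B_def C_def by auto
    qed
    have Wconn: "connected W" using chain_conn pq W_def by simp
    have MI: "M \<in> idx I" using idxr M by simp
    have JM: "0 \<le> a M \<and> a M \<le> b M \<and> b M \<le> 1" using J[OF MI] .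
    have p'I: "p' \<in> idx I" using idxr pq by simp
    have "{a i..b i} \<inter> {a p'..b p'} \<noteq> {}" using chain[of i] iI p'I by (simp add: p'_def)
    then obtain x where x: "x \<in> {a i..b i}" "x \<in> {a p'..b p'}" by blast
    have qj: "Suc q' = j" using j2 by (simp add: q'_def)
    have q'I: "q' \<in> idx I" using idxr pq by simp
    have "{a q'..b q'} \<inter> {a j..b j} \<noteq> {}" using chain[of q'] jI q'I qj by simp
    then obtain y where y: "y \<in> {a q'..b q'}" "y \<in> {a j..b j}" by blast
    have xW: "x \<in> W" using x pq W_def by auto
    have yW: "y \<in> W" using y pq W_def by auto
    have KW: "{c m..d m} \<subseteq> W" if "m < 3" for m
    proof
      fix z assume z: "z \<in> {c m..d m}"
      have "(x \<le> z \<and> z \<le> y) \<or> (y \<le> z \<and> z \<le> x)" using lb[OF that] x y z by auto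
      then show "z \<in> W" using Wconn xW yW unfolding connected_iff_interval by blast
    qed
    have bC: "bounded (f ` C)" using JM bnd C_def by blast
    have DM: "D M \<le> t/\<xi>*rp"
    proof -
      have "D M \<le> \<xi> powi (-k M) * rp" using diamJ[OF MI] .
      also have "\<dots> \<le> \<xi> powi (-(kk+1)) * rp" using pw_mono[of "kk+1" "k M"] M k'gt r by auto
      also have "\<dots> = t/\<xi>*rp" unfolding pw_step t_def ..
      finally show ?thesis .
    qed
    have tlt: "t/\<xi>*rp < t*rm"
    proof -
      have "t*rp < t*(\<xi>*rm)" using rp_lt t by simp
      then show ?thesis using xi_pos by (simp add: field_simps)
    qed
    have notsub: "\<not> {c m..d m} \<subseteq> C" if "m < 3" for m
    proof
      assume "{c m..d m} \<subseteq> C"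
      then have "diameter (f ` {c m..d m}) \<le> D M" using bC C_def by (intro diameter_subset) auto
      then show False using Kd[OF that] DM tlt by linarith
    qed
    have ends: "a M \<in> {c m..d m} \<or> b M \<in> {c m..d m}" if h1: "m < 3" and h2: "{c m..d m} \<inter> C \<noteq> {}" for m
    proof -
      obtain z where z: "z \<in> {c m..d m}" "z \<in> C" using h2 by blast
      have cm: "c m \<le> d m" using Kc[OF h1] by simp
      have "\<not> (a M \<le> c m \<and> d m \<le> b M)" using notsub[OF h1] cm C_def by auto
      then show ?thesis using z C_def by auto
    qed
    obtain m0 where m0: "m0 < 3" "{c m0..d m0} \<inter> C = {}"
    proof (rule ccontr)
      assume "\<not> thesis"
      then have allm: "\<And>m. m < 3 \<Longrightarrow> {c m..d m} \<inter> C \<noteq> {}" using that by blast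
      have e0: "a M \<in> {c 0..d 0} \<or> b M \<in> {c 0..d 0}" using ends allm by simp
      have e1: "a M \<in> {c 1..d 1} \<or> b M \<in> {c 1..d 1}" using ends allm by simp
      have e2: "a M \<in> {c 2..d 2} \<or> b M \<in> {c 2..d 2}" using ends[of 2] allm[of 2] by simp
      have d01: "{c 0..d 0} \<inter> {c 1..d 1} = {}" using disj[of 0 1] by simp
      have d02: "{c 0..d 0} \<inter> {c 2..d 2} = {}" using disj[of 0 2] by simp
      have d12: "{c 1..d 1} \<inter> {c 2..d 2} = {}" using disj[of 1 2] by simp
      show False using e0 e1 e2 d01 d02 d12 by blast
    qed
    define K where "K = {c m0..d m0}"
    have KAB: "K \<subseteq> A \<union> B" using KW[OF m0(1)] m0(2) WABC K_def by auto
    have Kne: "K \<noteq> {}" using Kc[OF m0(1)] K_def by simp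
    have distA: "dist (f u) (f v) \<le> SA" if "u \<in> A" "v \<in> A" for u v
    proof -
      have "p' \<le> M - 1" using that A_def by auto
      then show ?thesis using chain_dist[of p' "M-1" u v] that pq M idx_le[of "M-1" q'] by (auto simp: A_def SA_def)
    qed
    have distB: "dist (f u) (f v) \<le> SB" if "u \<in> B" "v \<in> B" for u v
    proof -
      have "Suc M \<le> q'" using that B_def by auto
      then show ?thesis using chain_dist[of "Suc M" q' u v] that pq by (auto simp: B_def SB_def)
    qed
    have clA: "closed A" unfolding A_def by (intro closed_UN) auto
    have clB: "closed B" unfolding B_def by (intro closed_UN) auto
    have Kconn: "connected K" unfolding K_def by simp
    have dK: "dist (f u) (f v) \<le> SA + SB" if "u \<in> K" "v \<in> K" for u v
    proof -
      have mixed: "dist (f u') (f v') \<le> SA + SB" if "u' \<in> K" "v' \<in> K" "u' \<in> A" "v' \<in> B" for u' v'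
      proof -
        have "A \<inter> B \<inter> K \<noteq> {}"
          using Kconn clA clB KAB that unfolding connected_closed by blast
        then obtain z where z: "z \<in> A" "z \<in> B" by blast
        have "dist (f u') (f v') \<le> dist (f u') (f z) + dist (f z) (f v')" by (rule dist_triangle)
        then show ?thesis using distA[of u' z] distB[of z v'] that z by linarith
      qed
      show ?thesis
      proof (cases "u \<in> A")
        case True
        then show ?thesis
        proof (cases "v \<in> A")
          case True then show ?thesis using distA[of u v] \<open>u \<in> A\<close> SBn by linarith
        next
          case False then show ?thesis using mixed[of u v] KAB that True by auto
        qed
      next
        case False
        then have uB: "u \<in> B" using KAB that by auto
        then show ?thesis
        proof (cases "v \<in> B")
          case True then show ?thesis using distB[of u v] uB SAn by linarith
        next
          case False
          then have "v \<in> A" using KAB that by auto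
          then show ?thesis using mixed[of v u] uB that by (simp add: dist_commute)
        qed
      qed
    qed
    have "diameter (f ` K) \<le> SA + SB"
      using Kne dK by (intro diameter_le_metric) auto
    then have "t * rm \<le> 2 * bd" using Kd[OF m0(1)] SA SB unfolding K_def by linarith
    then show False using arith_contra[OF t] bd by simp
  qed
qed


lemma claim:
  "Suc q - p < n \<Longrightarrow> 1 \<le> p \<Longrightarrow> enat q \<le> I \<Longrightarrow> (\<forall>l\<in>{p..q}. kk \<le> k l) \<Longrightarrow>
      (\<forall>l1\<in>{p..q}. \<forall>l2\<in>{p..q}. k l1 = kk \<longrightarrow> k l2 = kk \<longrightarrow> l1 = l2) \<and>
      (\<Sum>l\<in>{p..q}. D l) \<le> (1+3/\<xi>) * \<xi> powi (-kk) * rp"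
proof (induction n arbitrary: p q kk)
  case 0
  then show ?case by simp
next
  case (Suc n)
  note IH = Suc.IH
  have sz: "Suc q - p \<le> n" using Suc.prems(1) by simp
  have idxr: "l \<in> idx I" if "l \<in> {p..q}" for l
    using that Suc.prems idx_le[of l q] idx_mem[of l] by auto
  have uniq: "\<forall>l1\<in>{p..q}. \<forall>l2\<in>{p..q}. k l1 = kk' \<longrightarrow> k l2 = kk' \<longrightarrow> l1 = l2"
    if lo: "\<forall>l\<in>{p..q}. kk' \<le> k l" for kk'
  proof -
    have aux: False if i: "i \<in> {p..q}" "j' \<in> {p..q}" "i < j'" "k i = kk'" "k j' = kk'" for i j'
    proof -
      define j where "j = (LEAST l. i < l \<and> l \<le> q \<and> k l = kk')"
      have P: "i < j' \<and> j' \<le> q \<and> k j' = kk'" using i by auto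
      have jP: "i < j \<and> j \<le> q \<and> k j = kk'" unfolding j_def
        by (rule LeastI[of "\<lambda>l. i < l \<and> l \<le> q \<and> k l = kk'", OF P])
      have btw: "kk' < k l" if "i < l" "l < j" for l
      proof -
        have "\<not> (i < l \<and> l \<le> q \<and> k l = kk')" using not_less_Least[of l] that j_def by blast
        then have "k l \<noteq> kk'" using that jP by auto
        moreover have "kk' \<le> k l" using lo that jP i by auto
        ultimately show ?thesis by simp
      qed
      show False
      proof (rule no_two[of n j i kk'])
        show "\<And>p' q' kk'. Suc q' - p' < n \<Longrightarrow> 1 \<le> p' \<Longrightarrow> enat q' \<le> I \<Longrightarrow> (\<forall>l\<in>{p'..q'}. kk' \<le> k l) \<Longrightarrow>
          (\<forall>l1\<in>{p'..q'}. \<forall>l2\<in>{p'..q'}. k l1 = kk' \<longrightarrow> k l2 = kk' \<longrightarrow> l1 = l2) \<and>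
          (\<Sum>l\<in>{p'..q'}. D l) \<le> (1+3/\<xi>) * \<xi> powi (-kk') * rp" by (rule IH)
        show "Suc j - i \<le> n" using sz jP i by auto
        show "1 \<le> i" using i Suc.prems by auto
        show "i < j" using jP by simp
        show "enat j \<le> I" using jP Suc.prems idx_le by blast
        show "k i = kk'" by (rule i(4))
        show "k j = kk'" using jP by simp
        show "\<And>l. i < l \<Longrightarrow> l < j \<Longrightarrow> kk' < k l" by (rule btw)
      qed
    qed
    show ?thesis
    proof (intro ballI impI)
      fix l1 l2 assume l: "l1 \<in> {p..q}" "l2 \<in> {p..q}" "k l1 = kk'" "k l2 = kk'"
      show "l1 = l2"
      proof (rule ccontr)
        assume "l1 \<noteq> l2"
        then consider "l1 < l2" | "l2 < l1" by linarith
        then show False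
        proof cases
          case 1 then show False using aux[of l1 l2] l by blast
        next
          case 2 then show False using aux[of l2 l1] l by blast
        qed
      qed
    qed
  qed
  have sumb: "(\<Sum>l\<in>{p..q}. D l) \<le> (1+3/\<xi>) * \<xi> powi (-kk) * rp"
  proof (cases "p \<le> q")
    case False
    then have "{p..q} = {}" by simp
    moreover have "0 \<le> (1+3/\<xi>) * \<xi> powi (-kk) * rp" using xi_pos pw_pos[of "-kk"] r by simp
    ultimately show ?thesis by simp
  next
    case True
    define k0 where "k0 = Min (k ` {p..q})"
    have fin: "finite (k ` {p..q})" "k ` {p..q} \<noteq> {}" using True by auto
    obtain M where M: "M \<in> {p..q}" "k M = k0" using Min_in[OF fin] k0_def by auto
    have k0le: "\<forall>l\<in>{p..q}. k0 \<le> k l" using fin k0_def by auto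
    have kkk0: "kk \<le> k0" using Suc.prems(4) M by auto
    have U0: "\<forall>l1\<in>{p..q}. \<forall>l2\<in>{p..q}. k l1 = k0 \<longrightarrow> k l2 = k0 \<longrightarrow> l1 = l2" using uniq k0le by blast
    have gt: "k0 + 1 \<le> k l" if "l \<in> {p..q}" "l \<noteq> M" for l
    proof -
      have "k l \<noteq> k0" using U0 that M by blast
      then show ?thesis using k0le that by fastforce
    qed
    define t where "t = \<xi> powi (-k0)"
    have t: "t > 0" using pw_pos t_def by simp
    define bd where "bd = (1+3/\<xi>) * \<xi> powi (-(k0+1)) * rp"
    have bd: "bd = (1+3/\<xi>)*(t/\<xi>)*rp" unfolding bd_def pw_step t_def ..
    have SA: "(\<Sum>l\<in>{p..M-1}. D l) \<le> bd"
    proof -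
      have "Suc (M-1) - p < n" using M sz Suc.prems(2) by auto
      moreover have "enat (M-1) \<le> I" using M Suc.prems idx_le[of "M-1" q] by auto
      moreover have "\<forall>l\<in>{p..M-1}. k0+1 \<le> k l"
      proof
        fix l assume "l \<in> {p..M-1}"
        then have "l \<in> {p..q}" "l \<noteq> M" using M Suc.prems(2) by auto
        then show "k0+1 \<le> k l" by (rule gt)
      qed
      ultimately show ?thesis using IH[of "M-1" p "k0+1"] Suc.prems(2) by (simp add: bd_def)
    qed
    have SB: "(\<Sum>l\<in>{Suc M..q}. D l) \<le> bd"
    proof -
      have "Suc q - Suc M < n" using M sz by auto
      moreover have "\<forall>l\<in>{Suc M..q}. k0+1 \<le> k l"
      proof
        fix l assume "l \<in> {Suc M..q}"
        then have "l \<in> {p..q}" "l \<noteq> M" using M by auto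
        then show "k0+1 \<le> k l" by (rule gt)
      qed
      ultimately show ?thesis using IH[of q "Suc M" "k0+1"] Suc.prems by (simp add: bd_def)
    qed
    have MI: "M \<in> idx I" using idxr M by simp
    have DM: "D M \<le> t * rp" using diamJ[OF MI] M t_def by simp
    have split: "{p..q} = {p..M-1} \<union> {M} \<union> {Suc M..q}" using M Suc.prems(2) by auto
    have "(\<Sum>l\<in>{p..q}. D l) = (\<Sum>l\<in>{p..M-1}. D l) + D M + (\<Sum>l\<in>{Suc M..q}. D l)"
    proof -
      have "(\<Sum>l\<in>{p..q}. D l) = (\<Sum>l\<in>{p..M-1} \<union> {M} \<union> {Suc M..q}. D l)" using split by simp
      also have "\<dots> = (\<Sum>l\<in>{p..M-1} \<union> {M}. D l) + (\<Sum>l\<in>{Suc M..q}. D l)"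
        by (rule sum.union_disjoint) auto
      also have "(\<Sum>l\<in>{p..M-1} \<union> {M}. D l) = (\<Sum>l\<in>{p..M-1}. D l) + D M"
        using M Suc.prems(2) by (subst sum.union_disjoint) auto
      finally show ?thesis .
    qed
    also have "\<dots> \<le> t*rp + 2*((1+3/\<xi>)*(t/\<xi>)*rp)" using SA SB DM bd by linarith
    also have "\<dots> \<le> (1+3/\<xi>)*t*rp" by (rule arith_sum[OF t])
    also have "\<dots> \<le> (1+3/\<xi>) * \<xi> powi (-kk) * rp"
    proof -
      have "t \<le> \<xi> powi (-kk)" unfolding t_def by (rule pw_mono[OF kkk0])
      moreover have "0 \<le> (1+3/\<xi>)*rp" using xi_pos r by simp
      ultimately show ?thesis by (metis mult.assoc mult.commute mult_left_mono)
    qed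
    finally show ?thesis .
  qed
  show ?case using uniq[OF Suc.prems(4)] sumb by blast
qed

end

theorem mainTheorem18:
  fixes f :: "real \<Rightarrow> 'X::metric_space"
    and \<xi> rm rp :: real
    and I :: enat
    and a b :: "nat \<Rightarrow> real"
    and k :: "nat \<Rightarrow> int"
  assumes cont: "continuous_on {0..1} f"
    and xi: "\<xi> > 6"
    and r: "0 < rm" "rm < rp"
    and I1: "I \<ge> 1"
    and J: "\<And>i. i \<in> idx I \<Longrightarrow> 0 \<le> a i \<and> a i \<le> b i \<and> b i \<le> 1"
    and kbdd: "\<exists>B. \<forall>i\<in>idx I. B \<le> k i"
    and chain: "\<And>i. i \<in> idx I \<Longrightarrow> Suc i \<in> idx I \<Longrightarrow> {a i..b i} \<inter> {a (Suc i)..b (Suc i)} \<noteq> {}"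
    and diamJ: "\<And>i. i \<in> idx I \<Longrightarrow> diameter (f ` {a i..b i}) \<le> \<xi> powi (- k i) * rp"
    and sep: "\<And>i j. i \<in> idx I \<Longrightarrow> j \<in> idx I \<Longrightarrow> i \<noteq> j \<Longrightarrow> k i = k j \<Longrightarrow>
        \<exists>c d :: nat \<Rightarrow> real.
          (\<forall>m < nat \<lceil>3 * rp / rm\<rceil>. 0 \<le> c m \<and> c m \<le> d m \<and> d m \<le> 1
              \<and> diameter (f ` {c m..d m}) \<ge> \<xi> powi (- k i) * rm
              \<and> lies_between {c m..d m} (a i) (b i) (a j) (b j))
          \<and> (\<forall>m < nat \<lceil>3 * rp / rm\<rceil>. \<forall>m' < nat \<lceil>3 * rp / rm\<rceil>.
               m \<noteq> m' \<longrightarrow> {c m..d m} \<inter> {c m'..d m'} = {})"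
    and xir: "\<xi> > rp / rm"
  shows "(\<exists>!M. M \<in> idx I \<and> (\<forall>i\<in>idx I. k M \<le> k i)) \<and>
         (\<exists>M. M \<in> idx I \<and> (\<forall>i\<in>idx I. k M \<le> k i) \<and>
           (\<lambda>i. diameter (f ` {a i..b i})) summable_on idx I \<and>
           (\<Sum>\<^sub>\<infinity>i\<in>idx I. diameter (f ` {a i..b i})) \<le> (1 + 3 / \<xi>) * \<xi> powi (- k M) * rp)"
proof -
  interpret S: setting f \<xi> rm rp I a b k
    by (rule setting.intro) (fact cont xi r J chain diamJ sep xir)+
  obtain B where B: "\<forall>i\<in>idx I. B \<le> k i" using kbdd by blast
  have one: "1 \<in> idx I" using I1 by (simp add: idx_def one_enat_def)
  obtain M0 where M0: "M0 \<in> idx I" "\<forall>y. y \<in> idx I \<longrightarrow> nat (k M0 - B) \<le> nat (k y - B)"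
    using ex_has_least_nat[of "\<lambda>i. i \<in> idx I" 1 "\<lambda>i. nat (k i - B)"] one by blast
  have minM0: "\<forall>i\<in>idx I. k M0 \<le> k i"
  proof
    fix i assume i: "i \<in> idx I"
    have "nat (k M0 - B) \<le> nat (k i - B)" using M0(2) i by blast
    moreover have "0 \<le> k i - B" using B i by auto
    ultimately have "k M0 - B \<le> k i - B" using nat_le_eq_zle by blast
    then show "k M0 \<le> k i" by simp
  qed
  have idxD: "1 \<le> l \<and> enat l \<le> I" if "l \<in> idx I" for l using that by (simp add: idx_def)
  have lowq: "\<forall>l\<in>{1..q}. k M0 \<le> k l" if "enat q \<le> I" for q
  proof
    fix l assume "l \<in> {1..q}"
    then have "l \<in> idx I" using that S.idx_le[of l q] S.idx_mem[of l] by auto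
    then show "k M0 \<le> k l" using minM0 by blast
  qed
  have cl: "(\<forall>l1\<in>{1..q}. \<forall>l2\<in>{1..q}. k l1 = k M0 \<longrightarrow> k l2 = k M0 \<longrightarrow> l1 = l2) \<and>
      (\<Sum>l\<in>{1..q}. S.D l) \<le> (1+3/\<xi>) * \<xi> powi (-k M0) * rp" if "enat q \<le> I" for q
    using S.claim[of q 1 "Suc (Suc q)" "k M0"] that lowq[OF that] by simp
  have bpos: "0 \<le> (1+3/\<xi>) * \<xi> powi (-k M0) * rp" using S.xi_pos S.pw_pos[of "-k M0"] r by simp
  have part1: "\<exists>!M. M \<in> idx I \<and> (\<forall>i\<in>idx I. k M \<le> k i)"
  proof (rule ex1I[of _ M0])
    show "M0 \<in> idx I \<and> (\<forall>i\<in>idx I. k M0 \<le> k i)" using M0 minM0 by blast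
    fix M assume M: "M \<in> idx I \<and> (\<forall>i\<in>idx I. k M \<le> k i)"
    have kM: "k M = k M0" using M minM0 M0(1) by (meson order_antisym)
    define q where "q = max M M0"
    have q: "enat q \<le> I" using idxD[of M] idxD[of M0] M M0 by (auto simp: q_def max_def)
    have "M \<in> {1..q}" "M0 \<in> {1..q}" using idxD[of M] idxD[of M0] M M0 by (auto simp: q_def)
    then show "M = M0" using cl[OF q] kM by blast
  qed
  have fs: "sum (\<lambda>i. diameter (f ` {a i..b i})) F \<le> (1+3/\<xi>) * \<xi> powi (-k M0) * rp"
    if F: "finite F" "F \<subseteq> idx I" for F
  proof (cases "F = {}")
    case True then show ?thesis using bpos by simp
  next
    case False
    define q where "q = Max F"
    have qF: "q \<in> F" using F False q_def by simp
    have q: "enat q \<le> I" using idxD qF F by blast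
    have sub: "F \<subseteq> {1..q}" using F q_def idxD by fastforce
    have "sum (\<lambda>i. diameter (f ` {a i..b i})) F \<le> (\<Sum>l\<in>{1..q}. S.D l)"
    proof (rule sum_mono2[OF _ sub])
      fix l assume "l \<in> {1..q} - F"
      then have "l \<in> idx I" using q S.idx_le[of l q] S.idx_mem[of l] by auto
      then show "0 \<le> S.D l" by (rule S.Dnn)
    qed simp
    also have "\<dots> \<le> (1+3/\<xi>) * \<xi> powi (-k M0) * rp" using cl[OF q] by blast
    finally show ?thesis .
  qed
  have summ: "(\<lambda>i. diameter (f ` {a i..b i})) summable_on idx I"
  proof (rule nonneg_bdd_above_summable_on)
    show "\<And>x. x \<in> idx I \<Longrightarrow> 0 \<le> diameter (f ` {a x..b x})" by (rule S.Dnn)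
    show "bdd_above (sum (\<lambda>i. diameter (f ` {a i..b i})) ` {F. F \<subseteq> idx I \<and> finite F})"
      using fs by (intro bdd_aboveI2) auto
  qed
  have inf: "(\<Sum>\<^sub>\<infinity>i\<in>idx I. diameter (f ` {a i..b i})) \<le> (1 + 3 / \<xi>) * \<xi> powi (- k M0) * rp"
    using summ fs by (rule infsum_le_finite_sums)
  show ?thesis using part1 M0(1) minM0 summ inf by blast
qed

end
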